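(* Let $\mathcal P$ be a pre-Hahn-localizable family of probability measures on $(\Omega,\mathcal F)$ with a localization $\mathcal Q$ whose supports $\{S_Q\}$ are pairwise disjoint, and let $\mathcal H_{\mathcal F}^{\mathcal Q}$ be its Hahn-extension. Then $\mathcal P^{\mathcal Q}$ is Hahn-localizable on $(\Omega,\mathcal H_{\mathcal F}^{\mathcal Q})$, and $\mathcal Q^{\mathcal Q}=\{Q^{\mathcal Q}:Q\in\mathcal Q\}$ is a Hahn-localization of $\mathcal P^{\mathcal Q}$ with support sets $S_{Q^{\mathcal Q}}=S_Q$.
   Context: $\mathcal A\lll\mathcal B$ means every $A\in\mathcal A$ is absolutely continuous w.r.t. some $B\in\mathcal B$; $\mathrm{sconv}$ denotes countable convex combinations. On a measurable space $(\Omega,\mathcal G)$, a family $\mathcal P$ is pre-Hahn-localizable with localization $\mathcal Q$ (probability measures on $\mathcal G$) and supports $S_Q\in\mathcal G$ if $Q(S_R)=\delta_{QR}$ for $Q,R\in\mathcal Q$ and $\mathcal Q\lll\mathcal P\lll\mathrm{sconv}(\mathcal Q)$; this localization is a Hahn-localization (and $\mathcal P$ Hahn-localizable) if for every family $E_Q\in\mathcal G$, $E_Q\subseteq S_Q$, there is $S\in\mathcal G$ with $Q(E_Q\setminus S)=0$ for all $Q$, and any $F\in\mathcal G$ with $Q(E_Q\setminus F)=0$ for all $Q$ satisfies $Q(S\setminus F)=0$ for all $Q$. Hahn-extension: $\mathcal H_{\mathcal F}^{\mathcal Q}=\sigma\big(\mathcal F\cup\{\bigcup_{Q}E_Q:E_Q\in\mathcal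 F,E_Q\subseteq S_Q\}\big)$. For a probability measure $P$ on $\mathcal F$ absolutely continuous w.r.t. some element of $\mathcal P$ (including elements of $\mathcal P$ and $\mathcal Q$), $P^{\mathcal Q}(A)=\sum_{Q\in\mathcal Q(P)}P(A\cap S_Q)$ with $\mathcal Q(P)=\{Q:P(S_Q)>0\}$ (countable), a measure on $\mathcal H_{\mathcal F}^{\mathcal Q}$ extending $P$; $\mathcal P^{\mathcal Q}=\{P^{\mathcal Q}:P\in\mathcal P\}$. *)

theory Defs
  imports "HOL-Probability.Probability"
begin

text \<open>The measurable space (Omega, F) is represented by a measure M (only space M and
  sets M are used). A probability measure on (Omega, F) is a prob_space P with sets P = sets M.\<close>

definition prob_on :: "'a measure \<Rightarrow> 'a measure \<Rightarrow> bool" where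
  "prob_on M P \<longleftrightarrow> prob_space P \<and> sets P = sets M"

text \<open>A <<< B: every element of A is absolutely continuous w.r.t. some element of B.
  (absolutely_continuous B A means A << B.)\<close>

definition ac_fam :: "'a measure set \<Rightarrow> 'a measure set \<Rightarrow> bool" where
  "ac_fam \<A> \<B> \<longleftrightarrow> (\<forall>A\<in>\<A>. \<exists>B\<in>\<B>. absolutely_continuous B A)"

definition sconv :: "'a measure \<Rightarrow> 'a measure set \<Rightarrow> 'a measure set" where
  "sconv M \<Q> = {N. sets N = sets M \<and>
     (\<exists>(c :: nat \<Rightarrow> ennreal) Qs. (\<forall>n. Qs n \<in> \<Q>) \<and> (\<Sum>n. c n) = 1 \<and>
        (\<forall>A\<in>sets M. emeasure N A = (\<Sum>n. c n * emeasure (Qs n) A)))}"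

definition pre_hahn_loc ::
  "'a measure \<Rightarrow> 'a measure set \<Rightarrow> 'a measure set \<Rightarrow> ('a measure \<Rightarrow> 'a set) \<Rightarrow> bool" where
  "pre_hahn_loc M \<P> \<Q> S \<longleftrightarrow>
     (\<forall>P\<in>\<P>. prob_on M P) \<and>
     (\<forall>Q\<in>\<Q>. prob_on M Q \<and> S Q \<in> sets M) \<and>
     (\<forall>Q\<in>\<Q>. \<forall>R\<in>\<Q>. emeasure Q (S R) = (if Q = R then 1 else 0)) \<and>
     ac_fam \<Q> \<P> \<and> ac_fam \<P> (sconv M \<Q>)"

definition hahn_loc ::
  "'a measure \<Rightarrow> 'a measure set \<Rightarrow> 'a measure set \<Rightarrow> ('a measure \<Rightarrow> 'a set) \<Rightarrow> bool" where
  "hahn_loc M \<P> \<Q> S \<longleftrightarrow> pre_hahn_loc M \<P> \<Q> S \<and>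
     (\<forall>E. (\<forall>Q\<in>\<Q>. E Q \<in> sets M \<and> E Q \<subseteq> S Q) \<longrightarrow>
        (\<exists>T\<in>sets M. (\<forall>Q\<in>\<Q>. emeasure Q (E Q - T) = 0) \<and>
           (\<forall>F\<in>sets M. (\<forall>Q\<in>\<Q>. emeasure Q (E Q - F) = 0) \<longrightarrow>
              (\<forall>Q\<in>\<Q>. emeasure Q (T - F) = 0))))"

definition hahn_localizable :: "'a measure \<Rightarrow> 'a measure set \<Rightarrow> bool" where
  "hahn_localizable M \<P> \<longleftrightarrow> (\<exists>\<Q> S. hahn_loc M \<P> \<Q> S)"

definition hahn_extension :: "'a measure \<Rightarrow> 'a measure set \<Rightarrow> ('a measure \<Rightarrow> 'a set) \<Rightarrow> 'a set set" where
  "hahn_extension M \<Q> S = sigma_sets (space M)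
     (sets M \<union> {\<Union>Q\<in>\<Q>. E Q | E. \<forall>Q\<in>\<Q>. E Q \<in> sets M \<and> E Q \<subseteq> S Q})"

definition hahn_ext_space :: "'a measure \<Rightarrow> 'a measure set \<Rightarrow> ('a measure \<Rightarrow> 'a set) \<Rightarrow> 'a measure" where
  "hahn_ext_space M \<Q> S = measure_of (space M) (hahn_extension M \<Q> S) (\<lambda>_. 0)"

definition loc_ext :: "'a measure \<Rightarrow> 'a measure set \<Rightarrow> ('a measure \<Rightarrow> 'a set) \<Rightarrow> 'a measure \<Rightarrow> 'a measure" where
  "loc_ext M \<Q> S P = measure_of (space M) (hahn_extension M \<Q> S)
     (\<lambda>A. \<Sum>\<^sub>\<infinity>Q\<in>{Q\<in>\<Q>. emeasure P (S Q) > 0}. emeasure P (A \<inter> S Q))"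

end

theory Submission
  imports Defs
begin


lemma infsum_emeasure_range:
  fixes P :: "'a measure" and g :: "nat \<Rightarrow> 'b" and X :: "'b \<Rightarrow> 'a set"
  assumes XS: "\<And>R. R \<in> range g \<Longrightarrow> X R \<in> sets P"
    and dj: "disjoint_family_on X (range g)"
  shows "infsum (\<lambda>R. emeasure P (X R)) (range g) = emeasure P (\<Union>R\<in>range g. X R)"
proof -
  have U: "(\<Union>R\<in>range g. X R) = (\<Union>n. X (g n))" by auto
  have Usets: "(\<Union>R\<in>range g. X R) \<in> sets P" unfolding U using XS by auto
  have fin: "sum (\<lambda>R. emeasure P (X R)) F = emeasure P (\<Union>R\<in>F. X R)"
    if "finite F" "F \<subseteq> range g" for F
    using that XS dj by (intro sum_emeasure) (auto intro: disjoint_family_on_mono)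
  have "infsum (\<lambda>R. emeasure P (X R)) (range g)
      = (SUP F\<in>{F. finite F \<and> F \<subseteq> range g}. sum (\<lambda>R. emeasure P (X R)) F)"
    by (rule nonneg_infsum_complete) simp
  also have "\<dots> = (SUP F\<in>{F. finite F \<and> F \<subseteq> range g}. emeasure P (\<Union>R\<in>F. X R))"
    using fin by (intro SUP_cong) auto
  also have "\<dots> = emeasure P (\<Union>R\<in>range g. X R)"
  proof (rule antisym)
    show "(SUP F\<in>{F. finite F \<and> F \<subseteq> range g}. emeasure P (\<Union>R\<in>F. X R)) \<le> emeasure P (\<Union>R\<in>range g. X R)"
      by (intro SUP_least emeasure_mono Usets) auto
  next
    define A where "A n = (\<Union>i<n. X (g i))" for n
    have Ar: "range A \<subseteq> sets P" unfolding A_def using XS by auto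
    have Ai: "incseq A" unfolding A_def incseq_def using order_less_le_trans by fastforce
    have "emeasure P (\<Union>R\<in>range g. X R) = emeasure P (\<Union>n. A n)"
      unfolding U A_def by (intro arg_cong[where f="emeasure P"]) auto
    also have "\<dots> = (SUP n. emeasure P (A n))" using SUP_emeasure_incseq[OF Ar Ai] by simp
    also have "\<dots> \<le> (SUP F\<in>{F. finite F \<and> F \<subseteq> range g}. emeasure P (\<Union>R\<in>F. X R))"
    proof (rule SUP_least)
      fix n
      have "A n = (\<Union>R\<in>g ` {..<n}. X R)" unfolding A_def by auto
      moreover have "g ` {..<n} \<in> {F. finite F \<and> F \<subseteq> range g}" by auto
      ultimately show "emeasure P (A n) \<le> (SUP F\<in>{F. finite F \<and> F \<subseteq> range g}. emeasure P (\<Union>R\<in>F. X R))"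
        by (metis (no_types, lifting) SUP_upper)
    qed
    finally show "emeasure P (\<Union>R\<in>range g. X R) \<le> (SUP F\<in>{F. finite F \<and> F \<subseteq> range g}. emeasure P (\<Union>R\<in>F. X R))" .
  qed
  finally show ?thesis .
qed



context
  fixes M :: "'a measure" and \<Q> :: "'a measure set" and S :: "'a measure \<Rightarrow> 'a set"
  assumes SM: "\<And>Q. Q \<in> \<Q> \<Longrightarrow> S Q \<in> sets M"
    and disj: "\<And>Q R. Q \<in> \<Q> \<Longrightarrow> R \<in> \<Q> \<Longrightarrow> Q \<noteq> R \<Longrightarrow> S Q \<inter> S R = {}"
begin

lemma G_pow: "sets M \<union> {\<Union>Q\<in>\<Q>. E Q | E. \<forall>Q\<in>\<Q>. E Q \<in> sets M \<and> E Q \<subseteq> S Q} \<subseteq> Pow (space M)"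
  using sets.sets_into_space by fastforce

lemma H_pow: "hahn_extension M \<Q> S \<subseteq> Pow (space M)"
  unfolding hahn_extension_def using sigma_sets_into_sp[OF G_pow] by blast

lemma sets_M_H: "sets M \<subseteq> hahn_extension M \<Q> S"
  unfolding hahn_extension_def by (auto intro: sigma_sets.Basic)

lemma gen_H: "(\<forall>Q\<in>\<Q>. E Q \<in> sets M \<and> E Q \<subseteq> S Q) \<Longrightarrow> (\<Union>Q\<in>\<Q>. E Q) \<in> hahn_extension M \<Q> S"
  unfolding hahn_extension_def by (rule sigma_sets.Basic) blast

lemma sigma_H: "sigma_algebra (space M) (hahn_extension M \<Q> S)"
  unfolding hahn_extension_def by (rule sigma_algebra_sigma_sets[OF G_pow])

lemma sigma_sets_H: "sigma_sets (space M) (hahn_extension M \<Q> S) = hahn_extension M \<Q> S"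
  unfolding hahn_extension_def by (rule sigma_sets_sigma_sets_eq[OF G_pow])

lemma sets_loc_ext[simp]: "sets (loc_ext M \<Q> S P) = hahn_extension M \<Q> S"
  unfolding loc_ext_def by (simp add: sets_measure_of[OF H_pow] sigma_sets_H)

lemma space_loc_ext[simp]: "space (loc_ext M \<Q> S P) = space M"
  unfolding loc_ext_def by (simp add: space_measure_of_conv)

lemma sets_hes[simp]: "sets (hahn_ext_space M \<Q> S) = hahn_extension M \<Q> S"
  unfolding hahn_ext_space_def by (simp add: sets_measure_of[OF H_pow] sigma_sets_H)

lemma space_hes[simp]: "space (hahn_ext_space M \<Q> S) = space M"
  unfolding hahn_ext_space_def by (simp add: space_measure_of_conv)

lemma gen_Int: 
  assumes "\<forall>Q\<in>\<Q>. E Q \<in> sets M \<and> E Q \<subseteq> S Q" "R \<in> \<Q>"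
  shows "(\<Union>Q\<in>\<Q>. E Q) \<inter> S R = E R"
proof -
  have "x \<in> E R" if "x \<in> E Q" "Q \<in> \<Q>" "x \<in> S R" for x Q
  proof (cases "Q = R")
    case False
    then have "S Q \<inter> S R = {}" using disj that assms by auto
    then show ?thesis using that assms by auto
  qed (use that in auto)
  then show ?thesis using assms by auto
qed

lemma H_Int:
  assumes "A \<in> hahn_extension M \<Q> S" "R \<in> \<Q>"
  shows "A \<inter> S R \<in> sets M"
  using assms(1) unfolding hahn_extension_def
proof (induction rule: sigma_sets.induct)
  case (Basic a)
  then show ?case
  proof
    assume "a \<in> sets M" then show ?thesis using SM[OF assms(2)] by auto
  next
    assume "a \<in> {\<Union>Q\<in>\<Q>. E Q | E. \<forall>Q\<in>\<Q>. E Q \<in> sets M \<and> E Q \<subseteq> S Q}"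
    then obtain E where E: "\<forall>Q\<in>\<Q>. E Q \<in> sets M \<and> E Q \<subseteq> S Q" and a: "a = (\<Union>Q\<in>\<Q>. E Q)" by blast
    show ?thesis unfolding a gen_Int[OF E assms(2)] using E assms(2) by auto
  qed
next
  case Empty
  then show ?case by simp
next
  case (Compl a)
  have "(space M - a) \<inter> S R = S R - (a \<inter> S R)"
    using sets.sets_into_space[OF SM[OF assms(2)]] by auto
  then show ?case using Compl SM[OF assms(2)] by auto
next
  case (Union a)
  have "(\<Union>i. a i) \<inter> S R = (\<Union>i. a i \<inter> S R)" by auto
  moreover have "(\<Union>i. a i \<inter> S R) \<in> sets M" by (rule sets.countable_UN) (use Union in auto)
  ultimately show ?case by simp
qed

lemma emeasure_loc_ext:
  fixes P :: "'a measure" and g :: "nat \<Rightarrow> 'a measure"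
  assumes sP: "sets P = sets M" and g: "range g \<subseteq> \<Q>"
    and z: "\<And>R. R \<in> \<Q> \<Longrightarrow> R \<notin> range g \<Longrightarrow> emeasure P (S R) = 0"
    and A: "A \<in> hahn_extension M \<Q> S"
  shows "emeasure (loc_ext M \<Q> S P) A = emeasure P (A \<inter> (\<Union>n. S (g n)))"
proof -
  let ?H = "hahn_extension M \<Q> S"
  let ?U = "\<Union>n. S (g n)"
  have AU: "B \<inter> ?U \<in> sets M" if "B \<in> ?H" for B
  proof -
    have "B \<inter> ?U = (\<Union>n. B \<inter> S (g n))" by auto
    moreover have "(\<Union>n. B \<inter> S (g n)) \<in> sets M" by (rule sets.countable_UN) (use H_Int[OF that] g in auto)
    ultimately show ?thesis by simp
  qed
  have eq: "(\<Sum>\<^sub>\<infinity>Q\<in>{Q\<in>\<Q>. emeasure P (S Q) > 0}. emeasure P (B \<inter> S Q)) = emeasure P (B \<inter> ?U)"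
    if B: "B \<in> ?H" for B
  proof -
    have "(\<Sum>\<^sub>\<infinity>Q\<in>{Q\<in>\<Q>. emeasure P (S Q) > 0}. emeasure P (B \<inter> S Q))
       = (\<Sum>\<^sub>\<infinity>Q\<in>range g. emeasure P (B \<inter> S Q))"
    proof (rule infsum_cong_neutral)
      fix x assume x: "x \<in> range g - {Q \<in> \<Q>. 0 < emeasure P (S Q)}"
      then have "emeasure P (S x) = 0" "x \<in> \<Q>" using g by auto
      then show "emeasure P (B \<inter> S x) = 0"
        using emeasure_mono[of "B \<inter> S x" "S x" P] SM sP by (simp add: sP)
    next
      fix x assume "x \<in> {Q \<in> \<Q>. 0 < emeasure P (S Q)} - range g"
      then show "emeasure P (B \<inter> S x) = 0" using z by auto
    qed simp
    also have "\<dots> = emeasure P (\<Union>R\<in>range g. B \<inter> S R)"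
    proof (rule infsum_emeasure_range)
      show "\<And>R. R \<in> range g \<Longrightarrow> B \<inter> S R \<in> sets P" using H_Int[OF B] g sP by auto
      show "disjoint_family_on (\<lambda>R. B \<inter> S R) (range g)"
        unfolding disjoint_family_on_def using disj g by blast
    qed
    also have "(\<Union>R\<in>range g. B \<inter> S R) = B \<inter> ?U" by auto
    finally show ?thesis .
  qed
  have "loc_ext M \<Q> S P = measure_of (space M) ?H (\<lambda>B. emeasure P (B \<inter> ?U))"
    unfolding loc_ext_def by (rule measure_of_eq[OF H_pow]) (simp add: sigma_sets_H eq)
  moreover have "emeasure (measure_of (space M) ?H (\<lambda>B. emeasure P (B \<inter> ?U))) A = emeasure P (A \<inter> ?U)"
  proof (rule emeasure_measure_of_sigma[OF sigma_H _ _ A])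
    show "positive ?H (\<lambda>B. emeasure P (B \<inter> ?U))" unfolding positive_def by simp
    show "countably_additive ?H (\<lambda>B. emeasure P (B \<inter> ?U))"
      unfolding countably_additive_def
    proof (intro allI impI)
      fix F :: "nat \<Rightarrow> 'a set" assume F: "range F \<subseteq> ?H" "disjoint_family F"
      have "(\<Sum>i. emeasure P (F i \<inter> ?U)) = emeasure P (\<Union>i. F i \<inter> ?U)"
        proof (rule suminf_emeasure)
        show "range (\<lambda>i. F i \<inter> ?U) \<subseteq> sets P" using AU F sP by auto
        show "disjoint_family (\<lambda>i. F i \<inter> ?U)" using F(2) unfolding disjoint_family_on_def by blast
      qed
      also have "(\<Union>i. F i \<inter> ?U) = \<Union> (range F) \<inter> ?U" by auto
      finally show "(\<Sum>i. emeasure P (F i \<inter> ?U)) = emeasure P (\<Union> (range F) \<inter> ?U)" .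
    qed
  qed
  ultimately show ?thesis by simp
qed


lemma null_loc_ext:
  fixes P :: "'a measure" and g :: "nat \<Rightarrow> 'a measure"
  assumes sP: "sets P = sets M" and g: "range g \<subseteq> \<Q>"
    and z: "\<And>R. R \<in> \<Q> \<Longrightarrow> R \<notin> range g \<Longrightarrow> emeasure P (S R) = 0"
    and A: "A \<in> hahn_extension M \<Q> S"
  shows "emeasure (loc_ext M \<Q> S P) A = 0 \<longleftrightarrow> (\<forall>R\<in>\<Q>. emeasure P (A \<inter> S R) = 0)"
proof -
  let ?U = "\<Union>n. S (g n)"
  have e: "emeasure (loc_ext M \<Q> S P) A = emeasure P (A \<inter> ?U)"
    by (rule emeasure_loc_ext[OF sP g z A])
  have U: "A \<inter> ?U = (\<Union>n. A \<inter> S (g n))" by auto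
  have r: "range (\<lambda>n. A \<inter> S (g n)) \<subseteq> sets P" using H_Int[OF A] g sP by auto
  have AU: "A \<inter> ?U \<in> sets P" unfolding U by (rule sets.countable_UN[OF r])
  show ?thesis
  proof
    assume 0: "emeasure (loc_ext M \<Q> S P) A = 0"
    show "\<forall>R\<in>\<Q>. emeasure P (A \<inter> S R) = 0"
    proof
      fix R assume R: "R \<in> \<Q>"
      show "emeasure P (A \<inter> S R) = 0"
      proof (cases "R \<in> range g")
        case True
        then have "A \<inter> S R \<subseteq> A \<inter> ?U" by auto
        then have "emeasure P (A \<inter> S R) \<le> emeasure P (A \<inter> ?U)" by (rule emeasure_mono[OF _ AU])
        moreover have "emeasure P (A \<inter> ?U) = 0" using 0 e by simp
        ultimately show ?thesis by (simp only: le_zero_eq)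
      next
        case False
        have SRP: "S R \<in> sets P" using SM[OF R] sP by simp
        have "emeasure P (A \<inter> S R) \<le> emeasure P (S R)"
          by (rule emeasure_mono[OF _ SRP]) blast
        then show ?thesis using z[OF R False] by (simp only: le_zero_eq)
      qed
    qed
  next
    assume 0: "\<forall>R\<in>\<Q>. emeasure P (A \<inter> S R) = 0"
    have "emeasure P (\<Union>n. A \<inter> S (g n)) = 0"
    proof (rule emeasure_UN_eq_0[OF _ r])
      fix n show "emeasure P (A \<inter> S (g n)) = 0" using 0 g by blast
    qed
    then show "emeasure (loc_ext M \<Q> S P) A = 0" unfolding e U .
  qed
qed

end


context
  fixes M :: "'a measure" and \<Q> :: "'a measure set" and S :: "'a measure \<Rightarrow> 'a set"
  assumes SM: "\<And>Q. Q \<in> \<Q> \<Longrightarrow> S Q \<in> sets M"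
    and disj: "\<And>Q R. Q \<in> \<Q> \<Longrightarrow> R \<in> \<Q> \<Longrightarrow> Q \<noteq> R \<Longrightarrow> S Q \<inter> S R = {}"
    and Qp: "\<And>Q. Q \<in> \<Q> \<Longrightarrow> prob_on M Q"
    and delta: "\<And>Q R. Q \<in> \<Q> \<Longrightarrow> R \<in> \<Q> \<Longrightarrow> emeasure Q (S R) = (if Q = R then 1 else 0)"
begin

lemma Q_compl:
  assumes Q: "Q \<in> \<Q>"
  shows "emeasure Q (space M - S Q) = 0"
proof -
  have p: "prob_space Q" and s: "sets Q = sets M" using Qp[OF Q] unfolding prob_on_def by auto
  have sp: "space Q = space M" by (rule sets_eq_imp_space_eq[OF s])
  have SQ: "S Q \<in> sets Q" using SM[OF Q] s by simp
  have one: "emeasure Q (S Q) = 1" using delta[OF Q Q] by simp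
  have "emeasure Q (space Q - S Q) = emeasure Q (space Q) - emeasure Q (S Q)"
    by (rule emeasure_compl[OF SQ]) (simp add: one)
  then show ?thesis using prob_space.emeasure_space_1[OF p] one sp by simp
qed

lemma Q_restrict:
  assumes Q: "Q \<in> \<Q>" and X: "X \<in> sets M"
  shows "emeasure Q X = emeasure Q (X \<inter> S Q)"
proof -
  have s: "sets Q = sets M" using Qp[OF Q] unfolding prob_on_def by auto
  have sp: "space Q = space M" by (rule sets_eq_imp_space_eq[OF s])
  have N: "space M - S Q \<in> null_sets Q" using Q_compl[OF Q] SM[OF Q] s sp
    by (metis null_setsI sets.compl_sets)
  have XS: "X - S Q \<in> null_sets Q"
    by (rule null_sets_subset[OF N]) (use X s sets.sets_into_space[OF X] SM[OF Q] in auto)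
  have XQ: "X \<inter> S Q \<in> sets Q" using X SM[OF Q] s by auto
  have "X = (X \<inter> S Q) \<union> (X - S Q)" by auto
  then have "emeasure Q X = emeasure Q ((X \<inter> S Q) \<union> (X - S Q))" by simp
  also have "\<dots> = emeasure Q (X \<inter> S Q)" by (rule emeasure_Un_null_set[OF XQ XS])
  finally show ?thesis .
qed

lemma Q_good:
  assumes Q: "Q \<in> \<Q>"
  shows "sets Q = sets M" "range (\<lambda>_::nat. Q) \<subseteq> \<Q>"
    "\<And>R. R \<in> \<Q> \<Longrightarrow> R \<notin> range (\<lambda>_::nat. Q) \<Longrightarrow> emeasure Q (S R) = 0"
  using Qp[OF Q] Q delta[OF Q] unfolding prob_on_def by auto

lemma emeasure_loc_ext_Q:
  assumes Q: "Q \<in> \<Q>" and A: "A \<in> hahn_extension M \<Q> S"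
  shows "emeasure (loc_ext M \<Q> S Q) A = emeasure Q (A \<inter> S Q)"
  using emeasure_loc_ext[OF SM disj Q_good[OF Q] A] by simp

lemma null_loc_ext_Q:
  assumes Q: "Q \<in> \<Q>" and A: "A \<in> hahn_extension M \<Q> S"
  shows "emeasure (loc_ext M \<Q> S Q) A = 0 \<longleftrightarrow> (\<forall>R\<in>\<Q>. emeasure Q (A \<inter> S R) = 0)"
  by (rule null_loc_ext[OF SM disj Q_good[OF Q] A])

lemma sconv_facts:
  assumes sN: "sets N = sets M" and Qs: "\<And>n. Qs n \<in> \<Q>"
    and N: "\<forall>A\<in>sets M. emeasure N A = (\<Sum>n. c n * emeasure (Qs n) A)"
  shows "\<And>R. R \<in> \<Q> \<Longrightarrow> R \<notin> range Qs \<Longrightarrow> emeasure N (S R) = 0"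
    and "emeasure N (space M - (\<Union>n. S (Qs n))) = 0"
proof -
  fix R assume R: "R \<in> \<Q>" "R \<notin> range Qs"
  have "\<And>n. emeasure (Qs n) (S R) = 0" using delta[OF Qs R(1)] R(2) by (metis rangeI)
  then show "emeasure N (S R) = 0" using N SM[OF R(1)] by simp
next
  let ?U = "\<Union>n. S (Qs n)"
  have U: "?U \<in> sets M" using SM Qs by (intro sets.countable_UN) auto
  have C: "space M - ?U \<in> sets M" using U by auto
  have "emeasure (Qs n) (space M - ?U) = 0" for n
  proof -
    have s: "sets (Qs n) = sets M" using Qp[OF Qs] unfolding prob_on_def by auto
    have "emeasure (Qs n) (space M - ?U) \<le> emeasure (Qs n) (space M - S (Qs n))"
      by (rule emeasure_mono) (use s SM[OF Qs] in auto)
    then show ?thesis using Q_compl[OF Qs] by (simp only: le_zero_eq)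
  qed
  then show "emeasure N (space M - ?U) = 0" using N C by simp
qed

end



theorem lemma4p5:
  fixes M :: "'a measure" and \<P> \<Q> :: "'a measure set" and S :: "'a measure \<Rightarrow> 'a set"
  assumes "pre_hahn_loc M \<P> \<Q> S"
    and "\<forall>Q\<in>\<Q>. \<forall>R\<in>\<Q>. Q \<noteq> R \<longrightarrow> S Q \<inter> S R = {}"
  shows "hahn_localizable (hahn_ext_space M \<Q> S) (loc_ext M \<Q> S ` \<P>) \<and>
         (\<exists>S'. hahn_loc (hahn_ext_space M \<Q> S) (loc_ext M \<Q> S ` \<P>) (loc_ext M \<Q> S ` \<Q>) S' \<and>
               (\<forall>Q\<in>\<Q>. S' (loc_ext M \<Q> S Q) = S Q))"
proof -
  from assms(1) have Pp: "\<forall>P\<in>\<P>. prob_on M P" and Qs0: "\<forall>Q\<in>\<Q>. prob_on M Q \<and> S Q \<in> sets M"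
    and dl: "\<forall>Q\<in>\<Q>. \<forall>R\<in>\<Q>. emeasure Q (S R) = (if Q = R then 1 else 0)"
    and ac1: "ac_fam \<Q> \<P>" and ac2: "ac_fam \<P> (sconv M \<Q>)"
    unfolding pre_hahn_loc_def by auto
  have SM: "\<And>Q. Q \<in> \<Q> \<Longrightarrow> S Q \<in> sets M" using Qs0 by auto
  have disj: "\<And>Q R. Q \<in> \<Q> \<Longrightarrow> R \<in> \<Q> \<Longrightarrow> Q \<noteq> R \<Longrightarrow> S Q \<inter> S R = {}" using assms(2) by auto
  have Qp: "\<And>Q. Q \<in> \<Q> \<Longrightarrow> prob_on M Q" using Qs0 by auto
  have delta: "\<And>Q R. Q \<in> \<Q> \<Longrightarrow> R \<in> \<Q> \<Longrightarrow> emeasure Q (S R) = (if Q = R then 1 else 0)"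
    using dl by auto
  let ?L = "loc_ext M \<Q> S" and ?X = "hahn_ext_space M \<Q> S" and ?H = "hahn_extension M \<Q> S"
  have sL: "\<And>P. sets (?L P) = ?H" by (rule sets_loc_ext[OF SM disj])
  have spL: "\<And>P. space (?L P) = space M" by (rule space_loc_ext[OF SM disj])
  have sX: "sets ?X = ?H" by (rule sets_hes[OF SM disj])
  have spX: "space ?X = space M" by (rule space_hes[OF SM disj])
  have MH: "\<And>A. A \<in> sets M \<Longrightarrow> A \<in> ?H" by (rule subsetD[OF sets_M_H[OF SM disj]])
  have LQ: "\<And>Q A. Q \<in> \<Q> \<Longrightarrow> A \<in> ?H \<Longrightarrow> emeasure (?L Q) A = emeasure Q (A \<inter> S Q)"
    by (rule emeasure_loc_ext_Q[OF SM disj Qp delta])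
  have nQ: "\<And>Q A. Q \<in> \<Q> \<Longrightarrow> A \<in> ?H \<Longrightarrow> emeasure (?L Q) A = 0 \<longleftrightarrow> (\<forall>R\<in>\<Q>. emeasure Q (A \<inter> S R) = 0)"
    by (rule null_loc_ext_Q[OF SM disj Qp delta])
  have LQS: "\<And>Q R. Q \<in> \<Q> \<Longrightarrow> R \<in> \<Q> \<Longrightarrow> emeasure (?L Q) (S R) = (if Q = R then 1 else 0)"
  proof -
    fix Q R assume Q: "Q \<in> \<Q>" and R: "R \<in> \<Q>"
    have "emeasure (?L Q) (S R) = emeasure Q (S R \<inter> S Q)" by (rule LQ[OF Q MH[OF SM[OF R]]])
    then show "emeasure (?L Q) (S R) = (if Q = R then 1 else 0)"
      using delta[OF Q Q] disj[OF R Q] by (cases "Q = R") auto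
  qed
  have inj: "inj_on ?L \<Q>"
  proof (rule inj_onI)
    fix Q R assume Q: "Q \<in> \<Q>" and R: "R \<in> \<Q>" and eq: "?L Q = ?L R"
    show "Q = R"
    proof (rule ccontr)
      assume ne: "Q \<noteq> R"
      have "emeasure (?L Q) (S Q) = 1" using LQS[OF Q Q] by simp
      moreover have "emeasure (?L R) (S Q) = 0" using LQS[OF R Q] ne by simp
      ultimately show False using eq by simp
    qed
  qed
  define S' where "S' X = S (inv_into \<Q> ?L X)" for X
  have S'Q: "\<And>Q. Q \<in> \<Q> \<Longrightarrow> S' (?L Q) = S Q" unfolding S'_def using inv_into_f_f[OF inj] by simp
  have Pdom: "\<exists>N c Qs. absolutely_continuous N P \<and> sets N = sets M \<and> (\<forall>n. Qs n \<in> \<Q>) \<and>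
      (\<Sum>n. c n) = (1::ennreal) \<and> (\<forall>A\<in>sets M. emeasure N A = (\<Sum>n. c n * emeasure (Qs n) A))"
    if "P \<in> \<P>" for P
    using ac2 that unfolding ac_fam_def sconv_def by blast
  have Pinfo: "\<exists>N c Qs. absolutely_continuous N P \<and> sets N = sets M \<and> (\<forall>n. Qs n \<in> \<Q>) \<and>
      (\<Sum>n. c n) = (1::ennreal) \<and> (\<forall>A\<in>sets M. emeasure N A = (\<Sum>n. c n * emeasure (Qs n) A)) \<and>
      (\<forall>R\<in>\<Q>. R \<notin> range Qs \<longrightarrow> emeasure N (S R) = 0) \<and>
      (\<forall>R\<in>\<Q>. R \<notin> range Qs \<longrightarrow> emeasure P (S R) = 0) \<and>
      emeasure P (space M - (\<Union>n. S (Qs n))) = 0"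
    if P: "P \<in> \<P>" for P
  proof -
    obtain N c Qs where ac: "absolutely_continuous N P" and sN: "sets N = sets M" and Qs: "\<forall>n. Qs n \<in> \<Q>"
      and c: "(\<Sum>n. c n) = (1::ennreal)" and Nf: "\<forall>A\<in>sets M. emeasure N A = (\<Sum>n. c n * emeasure (Qs n) A)"
      using Pdom[OF P] by blast
    have sP: "sets P = sets M" using Pp P unfolding prob_on_def by auto
    note sf = sconv_facts[OF SM disj Qp delta sN _ Nf]
    have nul: "X \<in> null_sets N \<Longrightarrow> emeasure P X = 0" for X
      using ac unfolding absolutely_continuous_def by auto
    have z1: "\<forall>R\<in>\<Q>. R \<notin> range Qs \<longrightarrow> emeasure N (S R) = 0" using sf(1) Qs by blast
    have z2: "\<forall>R\<in>\<Q>. R \<notin> range Qs \<longrightarrow> emeasure P (S R) = 0"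
      using z1 SM sN by (auto intro!: nul)
    have U: "(\<Union>n. S (Qs n)) \<in> sets M" using SM Qs by (intro sets.countable_UN) auto
    have z3: "emeasure P (space M - (\<Union>n. S (Qs n))) = 0"
      using sf(2) Qs U sN by (auto intro!: nul)
    show ?thesis using ac sN Qs c Nf z1 z2 z3 by blast
  qed
  have nP: "\<And>A. A \<in> ?H \<Longrightarrow> emeasure (?L P) A = 0 \<longleftrightarrow> (\<forall>R\<in>\<Q>. emeasure P (A \<inter> S R) = 0)"
    if P: "P \<in> \<P>" for P
  proof -
    obtain Qs :: "nat \<Rightarrow> 'a measure" where Qs: "\<forall>n. Qs n \<in> \<Q>" and z: "\<forall>R\<in>\<Q>. R \<notin> range Qs \<longrightarrow> emeasure P (S R) = 0"
      using Pinfo[OF P] by blast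
    have sP: "sets P = sets M" using Pp P unfolding prob_on_def by auto
    have g: "range Qs \<subseteq> \<Q>" using Qs by auto
    fix A assume A: "A \<in> ?H"
    show "emeasure (?L P) A = 0 \<longleftrightarrow> (\<forall>R\<in>\<Q>. emeasure P (A \<inter> S R) = 0)"
      by (rule null_loc_ext[OF SM disj sP g _ A]) (use z in auto)
  qed
  have probP: "prob_on ?X (?L P)" if P: "P \<in> \<P>" for P
  proof -
    obtain Qs :: "nat \<Rightarrow> 'a measure" where Qs: "\<forall>n. Qs n \<in> \<Q>" and z: "\<forall>R\<in>\<Q>. R \<notin> range Qs \<longrightarrow> emeasure P (S R) = 0"
      and z3: "emeasure P (space M - (\<Union>n. S (Qs n))) = 0"
      using Pinfo[OF P] by blast
    have sP: "sets P = sets M" and pP: "prob_space P" using Pp P unfolding prob_on_def by auto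
    have spP: "space P = space M" by (rule sets_eq_imp_space_eq[OF sP])
    let ?U = "\<Union>n. S (Qs n)"
    have U: "?U \<in> sets M" using SM Qs by (intro sets.countable_UN) auto
    have e: "emeasure (?L P) (space M) = emeasure P (space M \<inter> ?U)"
      by (rule emeasure_loc_ext[OF SM disj sP]) (use Qs z MH[OF sets.top] in auto)
    have "space M \<inter> ?U = ?U" using sets.sets_into_space[OF U] by auto
    moreover have "emeasure P ?U = 1"
    proof -
      have "space M = ?U \<union> (space M - ?U)" using sets.sets_into_space[OF U] by auto
      then have "emeasure P (space M) = emeasure P (?U \<union> (space M - ?U))" by simp
      also have "\<dots> = emeasure P ?U"
        by (rule emeasure_Un_null_set) (use U sP z3 in auto)
      finally show ?thesis using prob_space.emeasure_space_1[OF pP] spP by simp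
    qed
    ultimately have "emeasure (?L P) (space (?L P)) = 1" using e spL by simp
    then show ?thesis unfolding prob_on_def using sL sX by (auto intro: prob_spaceI)
  qed
  have hl: "hahn_loc ?X (?L ` \<P>) (?L ` \<Q>) S'"
    unfolding hahn_loc_def pre_hahn_loc_def
  proof (intro conjI)
    show "\<forall>P\<in>?L ` \<P>. prob_on ?X P" using probP by auto
    show "\<forall>Q\<in>?L ` \<Q>. prob_on ?X Q \<and> S' Q \<in> sets ?X"
    proof
      fix Q' assume "Q' \<in> ?L ` \<Q>"
      then obtain Q where Q: "Q \<in> \<Q>" and Q': "Q' = ?L Q" by blast
      have "emeasure (?L Q) (space (?L Q)) = 1"
        using LQ[OF Q MH[OF sets.top]] spL delta[OF Q Q] SM[OF Q] sets.sets_into_space[OF SM[OF Q]]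
        by (simp add: Int_absorb1)
      then have "prob_space (?L Q)" by (rule prob_spaceI)
      then show "prob_on ?X Q' \<and> S' Q' \<in> sets ?X"
        unfolding prob_on_def Q' using S'Q[OF Q] sL sX MH[OF SM[OF Q]] by auto
    qed
    show "\<forall>Q\<in>?L ` \<Q>. \<forall>R\<in>?L ` \<Q>. emeasure Q (S' R) = (if Q = R then 1 else 0)"
    proof (intro ballI)
      fix Q' R' assume "Q' \<in> ?L ` \<Q>" "R' \<in> ?L ` \<Q>"
      then obtain Q R where Q: "Q \<in> \<Q>" "Q' = ?L Q" and R: "R \<in> \<Q>" "R' = ?L R" by blast
      have "(?L Q = ?L R) = (Q = R)" using inj_onD[OF inj _ Q(1) R(1)] by auto
      then show "emeasure Q' (S' R') = (if Q' = R' then 1 else 0)"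
        using LQS[OF Q(1) R(1)] S'Q[OF R(1)] Q R by simp
    qed
    show "ac_fam (?L ` \<Q>) (?L ` \<P>)"
      unfolding ac_fam_def
    proof
      fix Q' assume "Q' \<in> ?L ` \<Q>"
      then obtain Q where Q: "Q \<in> \<Q>" "Q' = ?L Q" by blast
      obtain P where P: "P \<in> \<P>" and acP: "absolutely_continuous P Q"
        using ac1 Q unfolding ac_fam_def by blast
      have sP: "sets P = sets M" using Pp P unfolding prob_on_def by auto
      have "absolutely_continuous (?L P) (?L Q)"
        unfolding absolutely_continuous_def
      proof
        fix A assume A: "A \<in> null_sets (?L P)"
        then have AH: "A \<in> ?H" and A0: "emeasure (?L P) A = 0" using sL by auto
        have "\<forall>R\<in>\<Q>. emeasure P (A \<inter> S R) = 0" using nP[OF P AH] A0 by simp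
        then have "\<forall>R\<in>\<Q>. emeasure Q (A \<inter> S R) = 0"
        proof (intro ballI)
          fix R assume R: "R \<in> \<Q>" and h: "\<forall>R\<in>\<Q>. emeasure P (A \<inter> S R) = 0"
          have "A \<inter> S R \<in> null_sets P"
            by (rule null_setsI) (use h R H_Int[OF SM disj AH R] sP in auto)
          then have "A \<inter> S R \<in> null_sets Q" using acP unfolding absolutely_continuous_def by blast
          then show "emeasure Q (A \<inter> S R) = 0" by (rule null_setsD1)
        qed
        then have "emeasure (?L Q) A = 0" using nQ[OF Q(1) AH] by simp
        then show "A \<in> null_sets (?L Q)" using AH sL by auto
      qed
      then show "\<exists>B\<in>?L ` \<P>. absolutely_continuous B Q'" using P Q by blast
    qed
    show "ac_fam (?L ` \<P>) (sconv ?X (?L ` \<Q>))"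
      unfolding ac_fam_def
    proof
      fix P' assume "P' \<in> ?L ` \<P>"
      then obtain P where P: "P \<in> \<P>" "P' = ?L P" by blast
      obtain N c Qs where ac: "absolutely_continuous N P" and sN: "sets N = sets M" and Qs: "\<forall>n. Qs n \<in> \<Q>"
        and c: "(\<Sum>n. c n) = (1::ennreal)" and Nf: "\<forall>A\<in>sets M. emeasure N A = (\<Sum>n. c n * emeasure (Qs n) A)"
        and z1: "\<forall>R\<in>\<Q>. R \<notin> range Qs \<longrightarrow> emeasure N (S R) = 0"
        using Pinfo[OF P(1)] by blast
      have sP: "sets P = sets M" using Pp P unfolding prob_on_def by auto
      let ?U = "\<Union>n. S (Qs n)"
      have LN: "emeasure (?L N) A = emeasure N (A \<inter> ?U)" if "A \<in> ?H" for A
        by (rule emeasure_loc_ext[OF SM disj sN]) (use Qs z1 that in auto)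
      have nN: "emeasure (?L N) A = 0 \<longleftrightarrow> (\<forall>R\<in>\<Q>. emeasure N (A \<inter> S R) = 0)" if "A \<in> ?H" for A
        by (rule null_loc_ext[OF SM disj sN]) (use Qs z1 that in auto)
      have "?L N \<in> sconv ?X (?L ` \<Q>)"
        unfolding sconv_def
      proof (intro CollectI conjI exI[of _ c] exI[of _ "\<lambda>n. ?L (Qs n)"])
        show "sets (?L N) = sets ?X" using sL sX by simp
        show "\<forall>n. ?L (Qs n) \<in> ?L ` \<Q>" using Qs by auto
        show "(\<Sum>n. c n) = 1" by (rule c)
        show "\<forall>A\<in>sets ?X. emeasure (?L N) A = (\<Sum>n. c n * emeasure (?L (Qs n)) A)"
        proof
          fix A assume "A \<in> sets ?X"
          then have AH: "A \<in> ?H" using sX by simp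
          have AU: "A \<inter> ?U \<in> sets M"
          proof -
            have "A \<inter> ?U = (\<Union>n. A \<inter> S (Qs n))" by auto
            moreover have "(\<Union>n. A \<inter> S (Qs n)) \<in> sets M"
              by (rule sets.countable_UN) (use H_Int[OF SM disj AH] Qs in auto)
            ultimately show ?thesis by simp
          qed
          have "emeasure (?L N) A = (\<Sum>n. c n * emeasure (Qs n) (A \<inter> ?U))"
            using LN[OF AH] Nf AU by simp
          also have "\<dots> = (\<Sum>n. c n * emeasure (?L (Qs n)) A)"
          proof (rule suminf_cong)
            fix n
            have "emeasure (Qs n) (A \<inter> ?U) = emeasure (Qs n) (A \<inter> ?U \<inter> S (Qs n))"
              by (rule Q_restrict[OF SM disj Qp delta]) (use Qs AU in auto)
            also have "A \<inter> ?U \<inter> S (Qs n) = A \<inter> S (Qs n)" by auto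
            also have "emeasure (Qs n) (A \<inter> S (Qs n)) = emeasure (?L (Qs n)) A"
              using LQ[OF _ AH] Qs by simp
            finally show "c n * emeasure (Qs n) (A \<inter> ?U) = c n * emeasure (?L (Qs n)) A" by simp
          qed
          finally show "emeasure (?L N) A = (\<Sum>n. c n * emeasure (?L (Qs n)) A)" .
        qed
      qed
      moreover have "absolutely_continuous (?L N) (?L P)"
        unfolding absolutely_continuous_def
      proof
        fix A assume A: "A \<in> null_sets (?L N)"
        then have AH: "A \<in> ?H" and A0: "emeasure (?L N) A = 0" using sL by auto
        have "\<forall>R\<in>\<Q>. emeasure N (A \<inter> S R) = 0" using nN[OF AH] A0 by simp
        then have "\<forall>R\<in>\<Q>. emeasure P (A \<inter> S R) = 0"
        proof (intro ballI)
          fix R assume R: "R \<in> \<Q>" and h: "\<forall>R\<in>\<Q>. emeasure N (A \<inter> S R) = 0"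
          have "A \<inter> S R \<in> null_sets N"
            by (rule null_setsI) (use h R H_Int[OF SM disj AH R] sN in auto)
          then have "A \<inter> S R \<in> null_sets P" using ac unfolding absolutely_continuous_def by blast
          then show "emeasure P (A \<inter> S R) = 0" by (rule null_setsD1)
        qed
        then have "emeasure (?L P) A = 0" using nP[OF P(1) AH] by simp
        then show "A \<in> null_sets (?L P)" using AH sL by auto
      qed
      ultimately show "\<exists>B\<in>sconv ?X (?L ` \<Q>). absolutely_continuous B P'" using P by blast
    qed
    show "\<forall>E. (\<forall>Q\<in>?L ` \<Q>. E Q \<in> sets ?X \<and> E Q \<subseteq> S' Q) \<longrightarrow>
        (\<exists>T\<in>sets ?X. (\<forall>Q\<in>?L ` \<Q>. emeasure Q (E Q - T) = 0) \<and>
           (\<forall>F\<in>sets ?X. (\<forall>Q\<in>?L ` \<Q>. emeasure Q (E Q - F) = 0) \<longrightarrow>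
              (\<forall>Q\<in>?L ` \<Q>. emeasure Q (T - F) = 0)))"
    proof (intro allI impI)
      fix E assume E: "\<forall>Q\<in>?L ` \<Q>. E Q \<in> sets ?X \<and> E Q \<subseteq> S' Q"
      define E0 where "E0 Q = E (?L Q)" for Q
      have E0S: "E0 Q \<subseteq> S Q" if "Q \<in> \<Q>" for Q using E that S'Q[OF that] unfolding E0_def by auto
      have E0H: "E0 Q \<in> ?H" if "Q \<in> \<Q>" for Q using E that sX unfolding E0_def by auto
      have E0M: "E0 Q \<in> sets M" if "Q \<in> \<Q>" for Q
        using H_Int[OF SM disj E0H[OF that] that] E0S[OF that] by (simp add: Int_absorb2)
      have E0c: "\<forall>Q\<in>\<Q>. E0 Q \<in> sets M \<and> E0 Q \<subseteq> S Q" using E0S E0M by blast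
      define T where "T = (\<Union>Q\<in>\<Q>. E0 Q)"
      have TH: "T \<in> ?H" unfolding T_def by (rule gen_H[OF SM disj E0c])
      have TS: "T \<inter> S Q = E0 Q" if "Q \<in> \<Q>" for Q
        unfolding T_def by (rule gen_Int[OF SM disj E0c that])
      show "\<exists>T\<in>sets ?X. (\<forall>Q\<in>?L ` \<Q>. emeasure Q (E Q - T) = 0) \<and>
           (\<forall>F\<in>sets ?X. (\<forall>Q\<in>?L ` \<Q>. emeasure Q (E Q - F) = 0) \<longrightarrow>
              (\<forall>Q\<in>?L ` \<Q>. emeasure Q (T - F) = 0))"
      proof (intro bexI[of _ T] conjI ballI impI)
        show "T \<in> sets ?X" using TH sX by simp
      next
        fix Q' assume "Q' \<in> ?L ` \<Q>"
        then obtain Q where Q: "Q \<in> \<Q>" "Q' = ?L Q" by blast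
        have "E Q' - T = {}" using Q unfolding T_def E0_def by auto
        then have "emeasure Q' (E Q' - T) = emeasure Q' {}" by (rule arg_cong)
        then show "emeasure Q' (E Q' - T) = 0" by simp
      next
        fix F Q' assume F: "F \<in> sets ?X" and hF: "\<forall>Q\<in>?L ` \<Q>. emeasure Q (E Q - F) = 0"
          and "Q' \<in> ?L ` \<Q>"
        then obtain Q where Q: "Q \<in> \<Q>" "Q' = ?L Q" by blast
        have FH: "F \<in> ?H" using F sX by simp
        have D1: "T - F \<in> ?H" using TH FH sX sets.Diff[of T ?X F] by simp
        have D2: "E0 Q - F \<in> ?H" using E0H[OF Q(1)] FH sX sets.Diff[of "E0 Q" ?X F] by simp
        have "emeasure (?L Q) (T - F) = emeasure Q ((T - F) \<inter> S Q)" by (rule LQ[OF Q(1) D1])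
        also have "(T - F) \<inter> S Q = (E0 Q - F) \<inter> S Q" using TS[OF Q(1)] E0S[OF Q(1)] by auto
        also have "emeasure Q ((E0 Q - F) \<inter> S Q) = emeasure (?L Q) (E0 Q - F)" by (rule LQ[OF Q(1) D2, symmetric])
        also have "\<dots> = 0" using hF Q unfolding E0_def by auto
        finally show "emeasure Q' (T - F) = 0" using Q by simp
      qed
    qed
  qed
  show ?thesis
    unfolding hahn_localizable_def using hl S'Q by blast
qed


end
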